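(* $R_{\mathcal{S}^*_{Ne}}(\mathcal{C})=2/5$, where $\mathcal{C}$ is the class of convex functions; the bound is sharp for $h(z)=z/(1-z)$, which satisfies $\mathcal{Q}_h(2/5)=5/3\in\partial\Omega_{Ne}$.
   Context: $\mathbb{D}=\{|z|<1\}$, $\mathbb{D}_r=\{|z|<r\}$. $\mathcal{A}$ is the class of analytic $f$ on $\mathbb{D}$ with $f(0)=0$, $f'(0)=1$; for $f\in\mathcal{A}$ let $\mathcal{Q}_f(z)=zf'(z)/f(z)$. $\mathcal{C}=\{f\in\mathcal{A}:\mathrm{Re}(1+zf''(z)/f'(z))>0,\ z\in\mathbb{D}\}$. Let $\varphi_{Ne}(z)=1+z-z^3/3$ (univalent on $\mathbb{D}$), $\Omega_{Ne}=\varphi_{Ne}(\mathbb{D})$, and $\mathcal{S}^*_{Ne}=\{f\in\mathcal{A}:\mathcal{Q}_f\prec\varphi_{Ne}\}$, where $F\prec G$ means $F=G\circ w$ for some analytic $w:\mathbb{D}\to\mathbb{D}$, $w(0)=0$. For $\mathcal{G}\subset\mathcal{A}$, $R_{\mathcal{S}^*_{Ne}}(\mathcal{G})$ is the largest $\rho\in(0,1]$ such that $\mathcal{Q}_f(\mathbb{D}_\rho)\subseteq\Omega_{Ne}$ for all $f\in\mathcal{G}$ (equivalently $r^{-1}f(rz)\in\mathcal{S}^*_{Ne}$ for all $f\in\mathcal{G}$, $0<r\le\rho$). *)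

theory Defs
  imports "HOL-Analysis.Analysis"
begin

definition classA :: "(complex \<Rightarrow> complex) set" where
  "classA = {f. f holomorphic_on ball 0 1 \<and> f 0 = 0 \<and> deriv f 0 = 1}"

text \<open>Q_f(z) = z f'(z) / f(z); at z = 0 the removable value 1 is used.\<close>
definition Qf :: "(complex \<Rightarrow> complex) \<Rightarrow> complex \<Rightarrow> complex" where
  "Qf f z = (if z = 0 then 1 else z * deriv f z / f z)"

definition convexClass :: "(complex \<Rightarrow> complex) set" where
  "convexClass = {f \<in> classA. \<forall>z \<in> ball 0 1.
      Re (1 + z * deriv (deriv f) z / deriv f z) > 0}"

definition phiNe :: "complex \<Rightarrow> complex" where
  "phiNe z = 1 + z - z ^ 3 / 3"

definition OmegaNe :: "complex set" where
  "OmegaNe = phiNe ` ball 0 1"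

definition radiusSNe :: "(complex \<Rightarrow> complex) set \<Rightarrow> real" where
  "radiusSNe G = (GREATEST \<rho>. 0 < \<rho> \<and> \<rho> \<le> 1 \<and>
      (\<forall>f \<in> G. Qf f ` ball 0 \<rho> \<subseteq> OmegaNe))"

end

theory Submission imports Defs "HOL-Complex_Analysis.Complex_Analysis" begin


lemma phi_real:
  assumes z: "z \<in> ball 0 1" and e: "phiNe z = complex_of_real x"
  shows "x < 5/3"
proof -
  obtain a b where zab: "z = Complex a b" by (cases z)
  have n: "a^2 + b^2 < 1" using z zab by (simp add: cmod_def)
  have im: "Im (phiNe z) = b * (1 - a^2 + b^2/3)"
    using zab by (simp add: phiNe_def power3_eq_cube power2_eq_square field_simps)
  have re: "Re (phiNe z) = 1 + a - (a^3 - 3*a*b^2)/3"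
    using zab by (simp add: phiNe_def power3_eq_cube power2_eq_square algebra_simps)
  have "b * (1 - a^2 + b^2/3) = 0" using im e by simp
  moreover have "1 - a^2 + b^2/3 > 0" proof -
    have "b^2 \<ge> 0" by simp
    then show ?thesis using n by linarith
  qed
  ultimately have b0: "b = 0" by simp
  have a1: "a < 1" "a > -1" using n b0 abs_square_less_1[of a] by (auto simp: power2_eq_square)
  have "x = 1 + a - a^3/3" using re e b0 by simp
  moreover have "(a-1)^2*(a+2) > 0" using a1 by (intro mult_pos_pos) auto
  ultimately show ?thesis by (simp add: power2_eq_square power3_eq_cube algebra_simps)
qed

lemma root_in_disc:
  fixes c :: complex assumes c: "norm c < 2"
  shows "\<exists>z \<in> ball 0 1. phiNe z = 1 + c/3"
proof -
  define T where "T = (\<lambda>z::complex. (z^3 + c)/3)"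
  have cont: "continuous_on (cball 0 1) T" unfolding T_def by (intro continuous_intros) auto
  have bnd: "norm (T z) \<le> (1 + norm c)/3" if "z \<in> cball 0 1" for z
  proof -
    have "norm (z^3) \<le> 1" using that by (simp add: norm_power power_le_one)
    then have "norm (z^3 + c) \<le> 1 + norm c" by (smt (verit) norm_triangle_ineq)
    then show ?thesis by (simp add: T_def norm_divide)
  qed
  have "T \<in> cball 0 1 \<rightarrow> cball 0 1" using bnd c by fastforce
  then obtain z where z: "z \<in> cball 0 1" "T z = z" using brouwer_ball[OF _ cont] by auto
  have "norm z < 1" using bnd[OF z(1)] z(2) c by simp
  moreover have "phiNe z = 1 + c/3"
  proof -
    have "z = (z^3 + c)/3" using z(2) T_def by simp
    then have "c = 3*z - z^3" by (simp add: field_simps)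
    then show ?thesis by (simp add: phiNe_def)
  qed
  ultimately show ?thesis by auto
qed

lemma disc_in_Omega:
  fixes \<zeta> :: complex assumes "norm \<zeta> < 2/5"
  shows "1/(1-\<zeta>) \<in> OmegaNe"
proof -
  have ne: "1 - \<zeta> \<noteq> 0" using assms by auto
  have n1: "norm (1 - \<zeta>) \<ge> 1 - norm \<zeta>" by (metis norm_one norm_triangle_ineq2)
  have "norm (3 * (\<zeta>/(1-\<zeta>))) < 2"
  proof -
    have "norm (3 * (\<zeta>/(1-\<zeta>))) = 3 * norm \<zeta> / norm (1-\<zeta>)" by (simp add: norm_divide)
    also have "\<dots> \<le> 3 * norm \<zeta> / (1 - norm \<zeta>)"
      using n1 assms by (intro divide_left_mono mult_pos_pos) auto
    also have "\<dots> < 2" using assms by (simp add: field_simps)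
    finally show ?thesis .
  qed
  then obtain z where z: "z \<in> ball 0 1" "phiNe z = 1 + 3 * (\<zeta>/(1-\<zeta>))/3"
    using root_in_disc by blast
  have "1 + 3 * (\<zeta>/(1-\<zeta>))/3 = 1/(1-\<zeta>)" using ne by (simp add: field_simps)
  then show ?thesis using z unfolding OmegaNe_def by (metis image_eqI)
qed

lemma five_thirds_frontier: "(5/3::complex) \<in> frontier OmegaNe"
proof -
  have notin: "(5/3::complex) \<notin> OmegaNe"
  proof
    assume "(5/3::complex) \<in> OmegaNe"
    then obtain z where "z \<in> ball 0 1" "phiNe z = complex_of_real (5/3)"
      unfolding OmegaNe_def by auto
    then show False using phi_real by fastforce
  qed
  have "phiNe ` closure (ball 0 1) \<subseteq> closure OmegaNe"
    unfolding OmegaNe_def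
    by (rule image_closure_subset) (auto simp: phiNe_def intro!: continuous_intros closure_subset)
  moreover have "(1::complex) \<in> closure (ball 0 1)" by simp
  moreover have "phiNe 1 = 5/3" by (simp add: phiNe_def)
  ultimately have "(5/3::complex) \<in> closure OmegaNe" by (metis image_subset_iff)
  then show ?thesis using notin interior_subset unfolding frontier_def by blast
qed



lemma aux1: "(u::complex) \<noteq> 0 \<Longrightarrow> (0 * u\<^sup>2 - 1 * (complex_of_nat 2 * ((0 - 1) * u ^ (2 - Suc 0)))) / (u\<^sup>2 * u\<^sup>2) = 2 / u ^ 3"
  by (simp add: field_simps power2_eq_square power3_eq_cube)
lemma aux2: "(u::complex) \<noteq> 0 \<Longrightarrow> 1 + (1-u) * (2/u^3) / (1/u^2) = (2-u)/u"
  by (simp add: field_simps power2_eq_square power3_eq_cube)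
lemma aux3: "t \<noteq> 0 \<Longrightarrow> (u::complex) \<noteq> 0 \<Longrightarrow> t * (1/u^2) / (t / u) = 1/u"
  by (simp add: field_simps power2_eq_square)

definition hh :: "complex \<Rightarrow> complex" where "hh = (\<lambda>z. z / (1 - z))"

lemma hh_deriv: "z \<noteq> 1 \<Longrightarrow> (hh has_field_derivative 1/(1-z)^2) (at z)"
  unfolding hh_def
  by (rule derivative_eq_intros refl | simp)+ (simp add: field_simps power2_eq_square)

lemma deriv_hh: "z \<noteq> 1 \<Longrightarrow> deriv hh z = 1/(1-z)^2"
  using hh_deriv DERIV_imp_deriv by blast

lemma deriv2_hh: assumes "z \<noteq> 1" shows "deriv (deriv hh) z = 2/(1-z)^3"
proof -
  have ev: "\<forall>\<^sub>F w in nhds z. deriv hh w = 1/(1-w)^2"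
  proof -
    have "open (- {1::complex})" by auto
    then have "\<forall>\<^sub>F w in nhds z. w \<in> - {1}" using assms eventually_nhds by blast
    then show ?thesis by eventually_elim (simp add: deriv_hh)
  qed
  have d: "((\<lambda>w. 1/(1-w)^2) has_field_derivative 2/(1-z)^3) (at z)"
    using assms
    apply -
    apply (rule derivative_eq_intros refl)+
    apply simp
    using aux1[of "1-z"] by simp
  have "deriv (deriv hh) z = deriv (\<lambda>w. 1/(1-w)^2) z"
    using deriv_cong_ev[OF ev refl] by simp
  also have "\<dots> = 2/(1-z)^3" using d DERIV_imp_deriv by blast
  finally show ?thesis .
qed

lemma hh_convex: "hh \<in> convexClass"
proof -
  have hol: "hh holomorphic_on ball 0 1"
    unfolding hh_def by (intro holomorphic_intros) auto
  have "\<forall>z \<in> ball 0 1. Re (1 + z * deriv (deriv hh) z / deriv hh z) > 0"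
  proof
    fix z :: complex assume z: "z \<in> ball 0 1"
    then have z1: "z \<noteq> 1" by auto
    then have ne: "1 - z \<noteq> 0" by auto
    have "1 + z * deriv (deriv hh) z / deriv hh z = (1 + z)/(1 - z)"
      using z1 ne aux2[of "1-z"] by (simp add: deriv_hh deriv2_hh)
    also have "Re ((1+z)/(1-z)) = (1 - (norm z)^2) / (norm (1-z))^2"
    proof -
      have "Re ((1+z)/(1-z)) = (Re (1+z) * Re (1-z) + Im (1+z) * Im (1-z)) / (norm (1-z))^2"
        by (simp add: Re_divide cmod_power2)
      also have "Re (1+z) * Re (1-z) + Im (1+z) * Im (1-z) = 1 - (norm z)^2"
        using cmod_power2[of z] by (simp add: algebra_simps power2_eq_square)
      finally show ?thesis .
    qed
    also have "\<dots> > 0" using z ne by (simp add: power_less_one_iff abs_square_less_1 divide_pos_pos)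
    finally show "Re (1 + z * deriv (deriv hh) z / deriv hh z) > 0" .
  qed
  moreover have "hh 0 = 0" by (simp add: hh_def)
  moreover have "deriv hh 0 = 1" by (simp add: deriv_hh)
  ultimately show ?thesis using hol unfolding convexClass_def classA_def by auto
qed

lemma Qf_hh: assumes "t \<noteq> 0" "t \<noteq> 1" shows "Qf hh (complex_of_real t) = complex_of_real (1/(1-t))"
proof -
  have ne: "1 - complex_of_real t \<noteq> 0" using assms
    by (metis eq_iff_diff_eq_0 of_real_eq_1_iff)
  show ?thesis using assms ne
    using aux3[of "complex_of_real t" "1 - complex_of_real t"]
    by (simp add: Qf_def deriv_hh hh_def)
qed



definition FF :: "(complex \<Rightarrow> complex) \<Rightarrow> complex \<Rightarrow> complex" where
  "FF f z = (if z = 0 then 1 else f z / z)"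

lemma FF_hol: assumes "f \<in> classA" shows "FF f holomorphic_on ball 0 1"
proof -
  have h: "f holomorphic_on ball 0 1" "f 0 = 0" "deriv f 0 = 1" using assms by (auto simp: classA_def)
  have "(\<lambda>z. if z = 0 then deriv f 0 else (f z - f 0) / (z - 0)) holomorphic_on ball 0 1"
    by (rule pole_lemma[OF h(1)]) simp
  moreover have "(\<lambda>z. if z = 0 then deriv f 0 else (f z - f 0) / (z - 0)) = FF f"
    using h by (auto simp: FF_def fun_eq_iff)
  ultimately show ?thesis by simp
qed

lemma re_real_deriv:
  assumes "(\<Phi> has_field_derivative D) (at (complex_of_real a))"
  shows "((\<lambda>t. Re (\<Phi> (complex_of_real t))) has_real_derivative Re D) (at a)"
  by (rule has_field_derivative_Re[OF has_vector_derivative_real_field[OF assms]])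

lemma im_real_deriv:
  assumes "(\<Phi> has_field_derivative D) (at (complex_of_real a))"
  shows "((\<lambda>t. Im (\<Phi> (complex_of_real t))) has_real_derivative Im D) (at a)"
  by (rule has_field_derivative_Im[OF has_vector_derivative_real_field[OF assms]])

lemma re_frac_nonpos:
  fixes w0 :: complex and k :: real
  assumes "norm w0 = 1" "k \<ge> 1" "w0 \<noteq> 1"
  shows "Re ((1 + complex_of_real k * w0) / (1 - w0)) \<le> 0"
proof -
  have n: "(Re w0)^2 + (Im w0)^2 = 1" using assms(1) cmod_power2[of w0] by simp
  have a1: "Re w0 \<le> 1" using complex_Re_le_cmod[of w0] assms(1) by simp
  have num: "Re (1 + complex_of_real k * w0) * Re (1 - w0) + Im (1 + complex_of_real k * w0) * Im (1 - w0)
      = - ((k - 1) * (1 - Re w0))"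
  proof -
    have "Re (1 + complex_of_real k * w0) * Re (1 - w0) + Im (1 + complex_of_real k * w0) * Im (1 - w0)
       = (1 + k * Re w0) * (1 - Re w0) - k * ((Re w0)^2 + (Im w0)^2) + k * (Re w0)^2"
      by (simp add: algebra_simps power2_eq_square)
    also have "\<dots> = - ((k - 1) * (1 - Re w0))" using n by (simp add: algebra_simps power2_eq_square)
    finally show ?thesis .
  qed
  have "(k - 1) * (1 - Re w0) \<ge> 0" using assms(2) a1 by simp
  then show ?thesis unfolding Re_divide' num by (intro divide_nonpos_nonneg) auto
qed

lemma jack:
  assumes fC: "f \<in> convexClass" and r: "0 < r" "r \<le> 1"
    and nz: "\<And>z. z \<in> ball 0 r \<Longrightarrow> deriv f z \<noteq> 0 \<and> FF f z \<noteq> 0"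
    and z2: "z \<in> ball 0 r"
  shows "norm (1 - FF f z / deriv f z) < 1"
proof (rule ccontr)
  assume nlt: "\<not> norm (1 - FF f z / deriv f z) < 1"
  define w where "w = (\<lambda>z. 1 - FF f z / deriv f z)"
  have fA: "f \<in> classA" and cv: "\<And>z. z \<in> ball 0 1 \<Longrightarrow> Re (1 + z * deriv (deriv f) z / deriv f z) > 0"
    using fC by (auto simp: convexClass_def)
  have holf: "f holomorphic_on ball 0 1" and f0: "f 0 = 0" and f'0: "deriv f 0 = 1"
    using fA by (auto simp: classA_def)
  have sub: "ball 0 r \<subseteq> ball (0::complex) 1" using r by auto
  have holw: "w holomorphic_on ball 0 r" unfolding w_def
  proof -
    have h1: "FF f holomorphic_on ball 0 r" using FF_hol[OF fA] holomorphic_on_subset[OF _ sub] by blast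
    have h2: "deriv f holomorphic_on ball 0 r" using holomorphic_deriv[OF holf] holomorphic_on_subset[OF _ sub] by blast
    show "(\<lambda>z. 1 - FF f z / deriv f z) holomorphic_on ball 0 r"
      by (intro holomorphic_on_diff holomorphic_on_const holomorphic_on_divide h1 h2) (use nz in auto)
  qed
  have contw: "continuous_on (ball 0 r) w" using holw holomorphic_on_imp_continuous_on by blast
  have w0: "w 0 = 0" by (simp add: w_def FF_def f'0)
  define R where "R = norm z"
  have cb: "cball 0 R \<subseteq> ball 0 r" using z2 by (auto simp: R_def)
  define K where "K = cball 0 R \<inter> w -` {x. 1 \<le> norm x}"
  have "closed K" unfolding K_def
    by (rule continuous_closed_preimage) (auto intro: continuous_on_subset[OF contw cb] closed_Collect_le continuous_intros)
  moreover have "bounded K" unfolding K_def by (rule bounded_Int) simp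
  ultimately have cK: "compact K" by (simp add: compact_eq_bounded_closed)
  have "z \<in> K" using nlt by (simp add: K_def R_def w_def)
  then have "K \<noteq> {}" by blast
  then obtain z0 where z0K: "z0 \<in> K" and mn: "\<And>y. y \<in> K \<Longrightarrow> norm z0 \<le> norm y"
    using continuous_attains_inf[OF cK _ continuous_on_norm_id] by blast
  define \<rho> where "\<rho> = norm z0"
  have z0ne: "z0 \<noteq> 0" using z0K w0 by (auto simp: K_def)
  have \<rho>pos: "\<rho> > 0" using z0ne by (simp add: \<rho>_def)
  have \<rho>R: "\<rho> \<le> R" using z0K by (simp add: K_def \<rho>_def)
  have z0r: "z0 \<in> ball 0 r" using z0K cb unfolding K_def by blast
  have z01: "z0 \<in> ball 0 1" using z0r sub by auto
  have small: "norm (w y) < 1" if "norm y < \<rho>" for y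
  proof (rule ccontr)
    assume "\<not> norm (w y) < 1"
    then have "y \<in> K" using that \<rho>R by (simp add: K_def)
    then show False using mn that \<rho>_def by fastforce
  qed
  have cbr: "cball 0 \<rho> \<subseteq> ball 0 r" using cb \<rho>R by auto
  have le1: "norm (w y) \<le> 1" if "norm y \<le> \<rho>" for y
  proof -
    have "continuous_on (closure (ball 0 \<rho>)) w"
      using \<rho>pos continuous_on_subset[OF contw cbr] by simp
    moreover have "\<forall>x\<in>ball 0 \<rho>. norm (w x) \<le> 1" using small by (simp add: less_imp_le)
    moreover have "y \<in> closure (ball 0 \<rho>)" using \<rho>pos that by simp
    ultimately show ?thesis by (rule continuous_on_closure_norm_le)
  qed
  define w0 where "w0 = w z0"
  have nw0: "norm w0 = 1" using z0K le1[of z0] by (simp add: K_def w0_def \<rho>_def)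
  have ww0: "w0 * cnj w0 = 1" using complex_norm_square[of w0] nw0 by simp
  define D where "D = deriv w z0"
  have Dw: "(w has_field_derivative D) (at z0)"
    unfolding D_def by (rule holomorphic_derivI[OF holw open_ball z0r])
  define k where "k = z0 * D * cnj w0"
  have imk: "Im k = 0"
  proof -
    have dE: "((\<lambda>s. z0 * exp (\<i> * s)) has_field_derivative z0 * \<i>) (at 0)"
      by (rule derivative_eq_intros refl | simp)+
    have "(w has_field_derivative D) (at (z0 * exp (\<i> * 0)))" using Dw by simp
    from DERIV_chain'[OF dE this]
    have "((\<lambda>s. w (z0 * exp (\<i> * s))) has_field_derivative D * (z0 * \<i>)) (at 0)" .
    from DERIV_cmult_right[OF this, of "cnj w0"]
    have "((\<lambda>s. w (z0 * exp (\<i> * s)) * cnj w0) has_field_derivative \<i> * k) (at (complex_of_real 0))"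
      by (simp add: k_def algebra_simps)
    from re_real_deriv[OF this]
    have dg: "((\<lambda>t. Re (w (z0 * exp (\<i> * complex_of_real t)) * cnj w0)) has_real_derivative - Im k) (at 0)"
      by simp
    have "\<forall>y. \<bar>0 - y\<bar> < 1 \<longrightarrow> Re (w (z0 * exp (\<i> * complex_of_real y)) * cnj w0)
            \<le> Re (w (z0 * exp (\<i> * complex_of_real 0)) * cnj w0)"
    proof (intro allI impI)
      fix y :: real
      have "Re (w (z0 * exp (\<i> * complex_of_real y)) * cnj w0) \<le> norm (w (z0 * exp (\<i> * complex_of_real y)) * cnj w0)"
        by (rule complex_Re_le_cmod)
      also have "\<dots> = norm (w (z0 * exp (\<i> * complex_of_real y)))" using nw0 by (simp add: norm_mult)
      also have "\<dots> \<le> 1" by (rule le1) (simp add: norm_mult \<rho>_def)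
      also have "1 = Re (w (z0 * exp (\<i> * complex_of_real 0)) * cnj w0)" using ww0 by (simp add: w0_def)
      finally show "Re (w (z0 * exp (\<i> * complex_of_real y)) * cnj w0)
            \<le> Re (w (z0 * exp (\<i> * complex_of_real 0)) * cnj w0)" .
    qed
    from DERIV_local_max[OF dg zero_less_one this] show ?thesis by simp
  qed
  have rek: "Re k \<ge> 1"
  proof -
    have dL: "((\<lambda>s. s * z0) has_field_derivative z0) (at 1)"
      by (rule derivative_eq_intros refl | simp)+
    have "(w has_field_derivative D) (at (1 * z0))" using Dw by simp
    from DERIV_chain'[OF dL this]
    have "((\<lambda>s. w (s * z0)) has_field_derivative D * z0) (at 1)" .
    from DERIV_cmult_right[OF this, of "cnj w0"]
    have "((\<lambda>s. w (s * z0) * cnj w0) has_field_derivative k) (at (complex_of_real 1))"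
      by (simp add: k_def algebra_simps)
    from re_real_deriv[OF this]
    have hr: "((\<lambda>t. Re (w (complex_of_real t * z0) * cnj w0)) has_real_derivative Re k) (at 1)" .
    define hf where "hf = (\<lambda>t. Re (w (complex_of_real t * z0) * cnj w0))"
    have "hf 1 = Re (w0 * cnj w0)" by (simp only: hf_def w0_def of_real_1 mult_1_left)
    then have hf1: "hf 1 = 1" using ww0 by simp
    define u where "u = (\<lambda>\<zeta>. w (\<zeta> * z0))"
    have holu: "u holomorphic_on ball 0 1"
    proof -
      have "((\<lambda>\<zeta>. \<zeta> * z0)) ` ball 0 1 \<subseteq> ball 0 r"
      proof
        fix x assume "x \<in> (\<lambda>\<zeta>. \<zeta> * z0) ` ball 0 1"
        then obtain \<zeta> where x: "x = \<zeta> * z0" "\<zeta> \<in> ball 0 1" by blast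
        then have "norm \<zeta> < 1" by simp
        have "norm x \<le> \<rho>" using x \<rho>pos \<open>norm \<zeta> < 1\<close> by (simp add: norm_mult \<rho>_def mult_left_le_one_le)
        then have "x \<in> cball 0 \<rho>" by simp
        then show "x \<in> ball 0 r" using cbr by blast
      qed
      then have "(w \<circ> (\<lambda>\<zeta>. \<zeta> * z0)) holomorphic_on ball 0 1"
        by (intro holomorphic_on_compose_gen[OF _ holw]) (auto intro: holomorphic_intros)
      then show ?thesis by (simp add: u_def o_def)
    qed
    have u0: "u 0 = 0" by (simp add: u_def w0)
    have ul: "norm (u \<zeta>) < 1" if "norm \<zeta> < 1" for \<zeta>
    proof -
      have "norm (\<zeta> * z0) < \<rho>" using that \<rho>pos by (simp add: norm_mult \<rho>_def)
      then show ?thesis by (simp add: u_def small)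
    qed
    have hfle: "hf t \<le> t" if "t \<in> {0<..<1}" for t
    proof -
      have "hf t \<le> norm (w (complex_of_real t * z0) * cnj w0)" unfolding hf_def by (rule complex_Re_le_cmod)
      also have "\<dots> = norm (u (complex_of_real t))" using nw0 by (simp add: norm_mult u_def)
      also have "\<dots> \<le> norm (complex_of_real t)"
        by (rule Schwarz_Lemma(1)[OF holu u0 ul]) (use that in auto)
      also have "\<dots> = t" using that by simp
      finally show ?thesis .
    qed
    have "((\<lambda>y. (hf y - hf 1) / (y - 1)) \<longlongrightarrow> Re k) (at_left 1)"
      using has_field_derivative_at_within[OF hr[folded hf_def], of "{..<1}"]
      unfolding has_field_derivative_iff .
    moreover have "\<forall>\<^sub>F y in at_left 1. 1 \<le> (hf y - hf 1) / (y - 1)"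
      using eventually_at_left_real[of 0 "1::real", OF zero_less_one]
    proof (rule eventually_mono)
      fix y :: real assume y: "y \<in> {0<..<1}"
      have "hf y - hf 1 \<le> y - 1" using hfle[OF y] hf1 by simp
      then show "1 \<le> (hf y - hf 1) / (y - 1)" using y by (simp add: le_divide_eq)
    qed
    ultimately show ?thesis by (rule tendsto_lowerbound) simp
  qed
  have kr: "k = complex_of_real (Re k)" using imk by (simp add: complex_eq_iff)
  have z0D: "z0 * D = complex_of_real (Re k) * w0"
  proof -
    have "k * w0 = z0 * D * (w0 * cnj w0)" by (simp add: k_def algebra_simps)
    then show ?thesis using ww0 kr by simp
  qed
  define a where "a = f z0"
  define b where "b = deriv f z0"
  define c where "c = deriv (deriv f) z0"
  have bne: "b \<noteq> 0" using nz[OF z0r] by (simp add: b_def)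
  have ane: "a \<noteq> 0" using nz[OF z0r] z0ne by (simp add: a_def FF_def)
  have fD: "(f has_field_derivative b) (at z0)" unfolding b_def by (rule holomorphic_derivI[OF holf open_ball z01])
  have f'D: "(deriv f has_field_derivative c) (at z0)" unfolding c_def
    by (rule holomorphic_derivI[OF holomorphic_deriv[OF holf open_ball] open_ball z01])
  define Dx where "Dx = - ((b * (z0 * b) - a * (b + z0 * c)) / (z0 * b)^2)"
  have "((\<lambda>z. 1 - f z / (z * deriv f z)) has_field_derivative Dx) (at z0)"
    unfolding Dx_def
    apply (rule derivative_eq_intros refl fD f'D)+
    using z0ne bne apply (simp add: b_def)
     apply (rule refl)
    by (simp add: a_def b_def power2_eq_square)
  then have "(w has_field_derivative Dx) (at z0)"
  proof (rule has_field_derivative_transform_within_open)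
    show "open (ball 0 r - {0})" by auto
    show "z0 \<in> ball 0 r - {0}" using z0r z0ne by auto
    show "1 - f x / (x * deriv f x) = w x" if "x \<in> ball 0 r - {0}" for x
      using that by (simp add: w_def FF_def)
  qed
  then have DDx: "D = Dx" using Dw DERIV_unique by blast
  have w0e: "w0 = 1 - (a / z0) / b" by (simp add: w0_def w_def FF_def z0ne a_def b_def)
  have iden: "1 + z0 * c / b = (1 + z0 * D) / (1 - w0)"
    unfolding DDx w0e Dx_def using z0ne ane bne by (simp add: field_simps power2_eq_square)
  have "Re (1 + z0 * c / b) > 0" using cv[OF z01] by (simp add: b_def c_def)
  moreover have "w0 \<noteq> 1" using w0e ane bne z0ne by simp
  then have "Re ((1 + complex_of_real (Re k) * w0) / (1 - w0)) \<le> 0"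
    using re_frac_nonpos nw0 rek by blast
  ultimately show False using iden z0D by simp
qed


lemma aux_cnj: "(A::complex) \<noteq> 0 \<Longrightarrow> T \<noteq> 0 \<Longrightarrow> (A * C) / T * (B * (T * Z) / A) = B * Z * C"
  by (simp add: field_simps)

lemma aux_q: "(a::complex) \<noteq> 0 \<Longrightarrow> z \<noteq> 0 \<Longrightarrow> d \<noteq> 0 \<Longrightarrow> z * d / a = 1 / (1 - (1 - a / z / d))"
  by (simp add: field_simps)

lemma re_inv:
  fixes G :: complex assumes "G \<noteq> 0" "norm (1 - G) < 1"
  shows "Re (1 / G) > 1/2"
proof -
  have "(norm (1 - G))^2 < 1" using assms(2) by (simp add: power_less_one_iff abs_square_less_1)
  then have "(1 - Re G)^2 + (Im G)^2 < 1" by (simp add: cmod_power2)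
  then have lt: "(Re G)^2 + (Im G)^2 < 2 * Re G" by (simp add: power2_eq_square algebra_simps)
  have pos: "(Re G)^2 + (Im G)^2 > 0" using assms(1)
    by (metis cmod_power2 zero_less_norm_iff zero_less_power)
  have "Re (1 / G) = Re G / ((Re G)^2 + (Im G)^2)" by (simp add: Re_divide)
  also have "\<dots> > 1/2" using lt pos by (simp add: field_simps)
  finally show ?thesis .
qed

lemma nonvanish:
  assumes fC: "f \<in> convexClass" and z1: "z1 \<in> ball 0 1"
  shows "deriv f z1 \<noteq> 0 \<and> FF f z1 \<noteq> 0"
proof (rule ccontr)
  assume bad: "\<not> (deriv f z1 \<noteq> 0 \<and> FF f z1 \<noteq> 0)"
  have fA: "f \<in> classA" using fC by (auto simp: convexClass_def)
  have holf: "f holomorphic_on ball 0 1" and f0: "f 0 = 0" and f'0: "deriv f 0 = 1"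
    using fA by (auto simp: classA_def)
  have holf': "deriv f holomorphic_on ball 0 1" using holomorphic_deriv[OF holf] by simp
  have holF: "FF f holomorphic_on ball 0 1" using FF_hol[OF fA] .
  have cf: "continuous_on (ball 0 1) f" using holf holomorphic_on_imp_continuous_on by blast
  have cf': "continuous_on (ball 0 1) (deriv f)" using holf' holomorphic_on_imp_continuous_on by blast
  have cF: "continuous_on (ball 0 1) (FF f)" using holF holomorphic_on_imp_continuous_on by blast
  define R where "R = norm z1"
  have cb: "cball 0 R \<subseteq> ball 0 1" using z1 by (auto simp: R_def)
  define S where "S = (cball 0 R \<inter> deriv f -` {0}) \<union> (cball 0 R \<inter> FF f -` {0})"
  have "closed S" unfolding S_def
    by (intro closed_Un continuous_closed_preimage continuous_on_subset[OF cf' cb] continuous_on_subset[OF cF cb]) auto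
  moreover have "bounded S"
  proof -
    have "S \<subseteq> cball 0 R" unfolding S_def by blast
    then show ?thesis using bounded_subset[OF bounded_cball] by blast
  qed
  ultimately have cS: "compact S" by (simp add: compact_eq_bounded_closed)
  have "z1 \<in> S" using bad by (auto simp: S_def R_def)
  then have "S \<noteq> {}" by blast
  then obtain zs where zsS: "zs \<in> S" and mn: "\<And>y. y \<in> S \<Longrightarrow> norm zs \<le> norm y"
    using continuous_attains_inf[OF cS _ continuous_on_norm_id] by blast
  have F0: "FF f 0 = 1" by (simp add: FF_def)
  have zsne: "zs \<noteq> 0" using zsS f'0 F0 by (auto simp: S_def)
  define r1 where "r1 = norm zs"
  have r1pos: "r1 > 0" using zsne by (simp add: r1_def)
  have r1R: "r1 \<le> R" using zsS by (auto simp: S_def r1_def)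
  have R1: "R < 1" using z1 by (simp add: R_def)
  have zs1: "zs \<in> ball 0 1" using r1R R1 by (simp add: r1_def)
  have nz: "deriv f z \<noteq> 0 \<and> FF f z \<noteq> 0" if "z \<in> ball 0 r1" for z
  proof (rule ccontr)
    assume "\<not> (deriv f z \<noteq> 0 \<and> FF f z \<noteq> 0)"
    then have "z \<in> S" using that r1R by (auto simp: S_def)
    then show False using mn that r1_def by fastforce
  qed
  have reH: "Re (deriv f z / FF f z) > 1/2" if "z \<in> ball 0 r1" for z
  proof -
    have "norm (1 - FF f z / deriv f z) < 1"
      using jack[OF fC r1pos _ nz that] r1R R1 by simp
    moreover have "FF f z / deriv f z \<noteq> 0" using nz[OF that] by simp
    ultimately have "Re (1 / (FF f z / deriv f z)) > 1/2" using re_inv by blast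
    then show ?thesis by simp
  qed
  have tline: "complex_of_real t * zs \<in> ball 0 r1" if "t \<in> {0<..<1}" for t
    using that r1pos by (simp add: norm_mult r1_def)
  show False
  proof (cases "FF f zs = 0")
    case False
    then have d0: "deriv f zs = 0" using zsS by (auto simp: S_def)
    define H where "H = (\<lambda>z. deriv f z / FF f z)"
    have "isCont (deriv f) zs" using cf' zs1 by (simp add: continuous_on_eq_continuous_at)
    moreover have "isCont (FF f) zs" using cF zs1 by (simp add: continuous_on_eq_continuous_at)
    ultimately have cH: "isCont H zs" unfolding H_def using False by (rule isCont_divide)
    have "((\<lambda>t. complex_of_real t * zs) \<longlongrightarrow> complex_of_real 1 * zs) (at_left 1)"
      by (intro tendsto_intros)
    then have "((\<lambda>t. complex_of_real t * zs) \<longlongrightarrow> zs) (at_left 1)" by simp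
    from isCont_tendsto_compose[OF cH this]
    have "((\<lambda>t. H (complex_of_real t * zs)) \<longlongrightarrow> H zs) (at_left 1)" .
    then have lim0: "((\<lambda>t. Re (H (complex_of_real t * zs))) \<longlongrightarrow> Re (H zs)) (at_left 1)"
      by (rule tendsto_Re)
    have "Re (H zs) = 0" by (simp add: H_def d0)
    then have lim: "((\<lambda>t. Re (H (complex_of_real t * zs))) \<longlongrightarrow> 0) (at_left 1)"
      using lim0 by simp
    have "\<forall>\<^sub>F t in at_left 1. 1/2 \<le> Re (H (complex_of_real t * zs))"
      using eventually_at_left_real[of 0 "1::real", OF zero_less_one]
    proof (rule eventually_mono)
      fix t :: real assume "t \<in> {0<..<1}"
      then have "1/2 < Re (H (complex_of_real t * zs))"
        using reH[OF tline] unfolding H_def by blast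
      then show "1/2 \<le> Re (H (complex_of_real t * zs))" by simp
    qed
    from tendsto_lowerbound[OF lim this] show False by simp
  next
    case True
    then have fzs: "f zs = 0" using zsne by (simp add: FF_def)
    define N where "N = (\<lambda>t. (Re (f (complex_of_real t * zs)))^2 + (Im (f (complex_of_real t * zs)))^2)"
    have seg: "complex_of_real t * zs \<in> ball 0 1" if "t \<in> {0..1}" for t
    proof -
      have "norm (complex_of_real t * zs) \<le> norm zs" using that
        by (simp add: norm_mult mult_left_le_one_le)
      then show ?thesis using zs1 by simp
    qed
    have contN: "continuous_on {1/2..1} N"
    proof -
      have "continuous_on {1/2..1} (\<lambda>t. f (complex_of_real t * zs))"
        by (rule continuous_on_compose2[OF cf]) (auto intro!: continuous_intros seg)
      then show ?thesis unfolding N_def by (intro continuous_intros)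
    qed
    have derN: "\<exists>y. DERIV N t :> y \<and> y \<ge> 0" if t: "1/2 < t" "t < 1" for t
    proof -
      define p where "p = complex_of_real t * zs"
      have pb: "p \<in> ball 0 r1" using t tline by (simp add: p_def)
      have p1: "p \<in> ball 0 1" using seg t by (simp add: p_def)
      have pne: "p \<noteq> 0" using t zsne by (simp add: p_def)
      have fpne: "f p \<noteq> 0" using nz[OF pb] pne by (simp add: FF_def)
      define d where "d = deriv f p * zs"
      have fD: "(f has_field_derivative deriv f p) (at (complex_of_real t * zs))"
        using holomorphic_derivI[OF holf open_ball p1] by (simp add: p_def)
      have dL: "((\<lambda>s. s * zs) has_field_derivative zs) (at (complex_of_real t))"
        by (rule derivative_eq_intros refl | simp)+
      have dPhi: "((\<lambda>s. f (s * zs)) has_field_derivative d) (at (complex_of_real t))"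
        using DERIV_chain'[OF dL fD] by (simp add: d_def)
      have dRe: "((\<lambda>t. Re (f (complex_of_real t * zs))) has_real_derivative Re d) (at t)"
        using re_real_deriv[OF dPhi] .
      have dIm: "((\<lambda>t. Im (f (complex_of_real t * zs))) has_real_derivative Im d) (at t)"
        using im_real_deriv[OF dPhi] .
      have "DERIV N t :> of_nat 2 * (Re d * (Re (f p)) ^ (2 - Suc 0)) + of_nat 2 * (Im d * (Im (f p)) ^ (2 - Suc 0))"
        unfolding N_def p_def by (rule DERIV_add[OF DERIV_power[OF dRe] DERIV_power[OF dIm]])
      then have "DERIV N t :> 2 * (Re (f p) * Re d + Im (f p) * Im d)"
        by (simp add: algebra_simps)
      moreover have "Re (f p) * Re d + Im (f p) * Im d > 0"
      proof -
        have "Re (f p) * Re d + Im (f p) * Im d = Re (d * cnj (f p))" by (simp add: algebra_simps)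
        also have "d * cnj (f p) = complex_of_real ((norm (f p))^2 / t) * (deriv f p / FF f p)"
        proof -
          have "complex_of_real ((norm (f p))^2) = f p * cnj (f p)" by (rule complex_norm_square)
          moreover have "deriv f p / FF f p = deriv f p * (complex_of_real t * zs) / f p"
            using pne by (simp add: FF_def p_def)
          moreover have "complex_of_real t \<noteq> 0" using t by simp
          ultimately show ?thesis using fpne aux_cnj[of "f p" "complex_of_real t" "cnj (f p)" "deriv f p" zs]
            by (simp add: d_def)
        qed
        also have "Re \<dots> = (norm (f p))^2 / t * Re (deriv f p / FF f p)"
          by (simp only: times_complex.sel Re_complex_of_real Im_complex_of_real mult_zero_left diff_0_right)
        also have "\<dots> > 0" using reH[OF pb] fpne t by (intro mult_pos_pos divide_pos_pos) auto
        finally show ?thesis .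
      qed
      ultimately show ?thesis by (intro exI[of _ "2 * (Re (f p) * Re d + Im (f p) * Im d)"]) auto
    qed
    have "N (1/2) \<le> N 1" by (rule DERIV_nonneg_imp_increasing_open[OF _ derN contN]) auto
    moreover have "N 1 = 0" using fzs by (simp add: N_def)
    moreover have "N (1/2) > 0"
    proof -
      have hb: "complex_of_real (1/2) * zs \<in> ball 0 r1" using tline[of "1/2"] by simp
      have "complex_of_real (1/2) * zs \<noteq> 0" using zsne by simp
      then have "f (complex_of_real (1/2) * zs) \<noteq> 0" using nz[OF hb] by (simp add: FF_def)
      then show ?thesis unfolding N_def
        by (metis cmod_power2 zero_less_norm_iff zero_less_power)
    qed
    ultimately show False by simp
  qed
qed

lemma main_incl:
  assumes fC: "f \<in> convexClass" and z: "z \<in> ball 0 (2/5)"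
  shows "Qf f z \<in> OmegaNe"
proof (cases "z = 0")
  case True
  have "phiNe 0 = 1" by (simp add: phiNe_def)
  then show ?thesis using True by (auto simp: Qf_def OmegaNe_def intro!: image_eqI[of _ _ 0])
next
  case False
  have fA: "f \<in> classA" using fC by (auto simp: convexClass_def)
  have holf: "f holomorphic_on ball 0 1" and f'0: "deriv f 0 = 1"
    using fA by (auto simp: classA_def)
  have nz: "\<And>z. z \<in> ball 0 1 \<Longrightarrow> deriv f z \<noteq> 0 \<and> FF f z \<noteq> 0" using nonvanish[OF fC] by blast
  define w where "w = (\<lambda>z. 1 - FF f z / deriv f z)"
  have holw: "w holomorphic_on ball 0 1" unfolding w_def
    by (intro holomorphic_on_diff holomorphic_on_const holomorphic_on_divide FF_hol[OF fA]
        holomorphic_deriv[OF holf]) (use nz in auto)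
  have wl: "norm (w \<zeta>) < 1" if "norm \<zeta> < 1" for \<zeta>
    using jack[OF fC zero_less_one order_refl nz] that by (simp add: w_def)
  have w0: "w 0 = 0" by (simp add: w_def FF_def f'0)
  have z1: "z \<in> ball 0 1" using z by simp
  have "norm z < 1" using z1 by simp
  from Schwarz_Lemma(1)[OF holw w0 wl this] have "norm (w z) \<le> norm z" .
  then have wz: "norm (w z) < 2/5" using z by simp
  have fz: "f z \<noteq> 0" using nz[OF z1] False by (simp add: FF_def)
  have d: "deriv f z \<noteq> 0" using nz[OF z1] by simp
  have "Qf f z = 1 / (1 - w z)" using False fz d aux_q[of "f z" z "deriv f z"]
    by (simp add: Qf_def w_def FF_def)
  then show ?thesis using disc_in_Omega[OF wz] by simp
qed

theorem mainTheorem5: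
  shows "radiusSNe convexClass = 2 / 5
    \<and> (\<lambda>z. z / (1 - z)) \<in> convexClass
    \<and> Qf (\<lambda>z. z / (1 - z)) (complex_of_real (2 / 5)) = 5 / 3
    \<and> (5 / 3 :: complex) \<in> frontier OmegaNe"
proof -
  have r: "radiusSNe convexClass = 2 / 5"
    unfolding radiusSNe_def
  proof (rule Greatest_equality)
    show "0 < (2/5::real) \<and> (2/5::real) \<le> 1 \<and> (\<forall>f\<in>convexClass. Qf f ` ball 0 (2/5) \<subseteq> OmegaNe)"
      using main_incl by auto
  next
    fix \<rho> :: real
    assume P: "0 < \<rho> \<and> \<rho> \<le> 1 \<and> (\<forall>f\<in>convexClass. Qf f ` ball 0 \<rho> \<subseteq> OmegaNe)"
    show "\<rho> \<le> 2/5"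
    proof (rule ccontr)
      assume "\<not> \<rho> \<le> 2/5"
      define t where "t = (2/5 + \<rho>)/2"
      have t: "2/5 < t" "t < \<rho>" "t < 1" using P \<open>\<not> \<rho> \<le> 2/5\<close> by (auto simp: t_def)
      have "complex_of_real t \<in> ball 0 \<rho>" using t by simp
      then have "Qf hh (complex_of_real t) \<in> OmegaNe" using P hh_convex by blast
      then have "complex_of_real (1/(1-t)) \<in> OmegaNe" using Qf_hh[of t] t by simp
      then obtain z where "z \<in> ball 0 1" "phiNe z = complex_of_real (1/(1-t))"
        unfolding OmegaNe_def by auto
      then have "1/(1-t) < 5/3" by (rule phi_real)
      then show False using t by (simp add: field_simps)
    qed
  qed
  have q: "Qf hh (complex_of_real (2 / 5)) = 5 / 3" using Qf_hh[of "2/5"] by simp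
  show ?thesis using r hh_convex q five_thirds_frontier unfolding hh_def by simp
qed

end
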